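(* Let $(D,S,B)$ be a datum. Then the map $\mathrm{Supp}\colon \mathrm{Sub}_S(D)\to\{\text{subsets of }\mathrm{Spc}(D,S)\}$, $I\mapsto \mathrm{Supp}(I)=\{P\in\mathrm{Spc}(D,S)\mid I\not\subset P\}$, is injective, and a left inverse is given by $Z\mapsto\{a\in D\mid \mathrm{Supp}(a)\subset Z\}$.
   Context: $\mathrm{Cat}_\infty^{\mathrm{perf}}$ denotes the $\infty$-category of small idempotent-complete stable $\infty$-categories. A datum $(D,S,B)$ consists of algebra objects $B,S$ of $\mathrm{Cat}_\infty^{\mathrm{perf}}$, a homomorphism $B\to S$, and a left $S$-module $D$ in $\mathrm{Cat}_\infty^{\mathrm{perf}}$; the action is written $s\otimes a$. An $S$-submodule of $D$ is a thick subcategory $I\subset D$ with $s\otimes a\in I$ for all $s\in S,a\in I$; $\mathrm{Sub}_S(D)$ is the set of $S$-submodules. An $S$-submodule $P$ is prime if for every family $\{I_i\}$ of $S$-submodules each strictly containing $P$, $\bigcap_i I_i$ strictly contains $P$. $\mathrm{Spc}(D,S)$ is the set of prime $S$-submodules; for $a\in D$, $\mathrm{Supp}(a)=\{P\in\mathrm{Spc}(D,S)\mid a\notin P\}$. *)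

theory Defs
  imports Main
begin

text \<open>The objects of D form the type 'a
(objects of the stable category; the ambient D is UNIV).  The stable structure
enters only through the data relevant to thickness:
  zero: a zero object; shift / shift_inv: suspension and its inverse;
  iso a b: a and b are equivalent; cofib a b c: there is a cofiber sequence
  a -> b -> c; retract a b: a is a retract of b.
The S-action is act s a (written s (x) a in the paper), s ranging over the
objects of S (type 's).  B and B -> S play no role in the statement.\<close>

record ('a, 's) datum =
  zero :: 'a
  shift :: "'a \<Rightarrow> 'a"
  shift_inv :: "'a \<Rightarrow> 'a"
  iso :: "'a \<Rightarrow> 'a \<Rightarrow> bool"
  cofib :: "'a \<Rightarrow> 'a \<Rightarrow> 'a \<Rightarrow> bool"
  retract :: "'a \<Rightarrow> 'a \<Rightarrow> bool"
  act :: "'s \<Rightarrow> 'a \<Rightarrow> 'a"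

definition thick :: "('a, 's) datum \<Rightarrow> 'a set \<Rightarrow> bool" where
  "thick X I \<longleftrightarrow>
     zero X \<in> I
   \<and> (\<forall>a b. iso X a b \<longrightarrow> a \<in> I \<longrightarrow> b \<in> I)
   \<and> (\<forall>a \<in> I. shift X a \<in> I \<and> shift_inv X a \<in> I)
   \<and> (\<forall>a b c. cofib X a b c \<longrightarrow>
        (a \<in> I \<and> b \<in> I \<longrightarrow> c \<in> I) \<and>
        (a \<in> I \<and> c \<in> I \<longrightarrow> b \<in> I) \<and>
        (b \<in> I \<and> c \<in> I \<longrightarrow> a \<in> I))
   \<and> (\<forall>a b. retract X a b \<longrightarrow> b \<in> I \<longrightarrow> a \<in> I)"

definition submodule :: "('a, 's) datum \<Rightarrow> 'a set \<Rightarrow> bool" where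
  "submodule X I \<longleftrightarrow> thick X I \<and> (\<forall>s. \<forall>a \<in> I. act X s a \<in> I)"

definition Sub :: "('a, 's) datum \<Rightarrow> 'a set set" where
  "Sub X = {I. submodule X I}"

text \<open>Prime: every family of submodules each strictly containing P has
intersection strictly containing P (the empty family has intersection D = UNIV).\<close>
definition prime_sub :: "('a, 's) datum \<Rightarrow> 'a set \<Rightarrow> bool" where
  "prime_sub X P \<longleftrightarrow> submodule X P \<and>
     (\<forall>F. F \<subseteq> Sub X \<longrightarrow> (\<forall>I\<in>F. P \<subset> I) \<longrightarrow> P \<subset> \<Inter>F)"

definition Spc :: "('a, 's) datum \<Rightarrow> 'a set set" where
  "Spc X = {P. prime_sub X P}"

definition Supp :: "('a, 's) datum \<Rightarrow> 'a \<Rightarrow> 'a set set" where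
  "Supp X a = {P \<in> Spc X. a \<notin> P}"

definition SuppI :: "('a, 's) datum \<Rightarrow> 'a set \<Rightarrow> 'a set set" where
  "SuppI X I = {P \<in> Spc X. \<not> I \<subseteq> P}"

end

theory Submission
  imports Defs
begin

lemma chain_two:
  assumes "chain\<^sub>\<subseteq> C" "x \<in> \<Union>C" "y \<in> \<Union>C"
  shows "\<exists>J\<in>C. x \<in> J \<and> y \<in> J"
  using assms unfolding chain_subset_def by blast

lemma chain_union_submodule:
  assumes ne: "C \<noteq> {}" and sub: "\<forall>J\<in>C. submodule X J" and ch: "chain\<^sub>\<subseteq> C"
  shows "submodule X (\<Union>C)"
proof -
  have two: "\<And>x y. x \<in> \<Union>C \<Longrightarrow> y \<in> \<Union>C \<Longrightarrow> \<exists>J\<in>C. x \<in> J \<and> y \<in> J"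
    using chain_two[OF ch] by blast
  have th: "\<And>J. J \<in> C \<Longrightarrow> thick X J" and ac: "\<And>J. J \<in> C \<Longrightarrow> \<forall>s. \<forall>a\<in>J. act X s a \<in> J"
    using sub unfolding submodule_def by auto
  show ?thesis
    unfolding submodule_def thick_def
  proof (intro conjI allI impI ballI)
    obtain J where "J \<in> C" using ne by blast
    then show "zero X \<in> \<Union>C" using th[of J] unfolding thick_def by blast
  next
    fix a b assume "iso X a b" "a \<in> \<Union>C"
    then show "b \<in> \<Union>C" using th unfolding thick_def by blast
  next
    fix a assume "a \<in> \<Union>C" then show "shift X a \<in> \<Union>C" using th unfolding thick_def by blast
  next
    fix a assume "a \<in> \<Union>C" then show "shift_inv X a \<in> \<Union>C" using th unfolding thick_def by blast
  next
    fix a b c assume cf: "cofib X a b c" and m: "a \<in> \<Union>C \<and> b \<in> \<Union>C"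
    then obtain J where "J \<in> C" "a \<in> J" "b \<in> J" using two by blast
    then show "c \<in> \<Union>C" using th[of J] cf unfolding thick_def by blast
  next
    fix a b c assume cf: "cofib X a b c" and m: "a \<in> \<Union>C \<and> c \<in> \<Union>C"
    then obtain J where "J \<in> C" "a \<in> J" "c \<in> J" using two by blast
    then show "b \<in> \<Union>C" using th[of J] cf unfolding thick_def by blast
  next
    fix a b c assume cf: "cofib X a b c" and m: "b \<in> \<Union>C \<and> c \<in> \<Union>C"
    then obtain J where "J \<in> C" "b \<in> J" "c \<in> J" using two by blast
    then show "a \<in> \<Union>C" using th[of J] cf unfolding thick_def by blast
  next
    fix a b assume "retract X a b" "b \<in> \<Union>C"
    then show "a \<in> \<Union>C" using th unfolding thick_def by blast
  next
    fix s a assume "a \<in> \<Union>C" then show "act X s a \<in> \<Union>C" using ac by blast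
  qed
qed

lemma exists_prime:
  assumes I: "submodule X I" and a: "a \<notin> I"
  shows "\<exists>P\<in>Spc X. I \<subseteq> P \<and> a \<notin> P"
proof -
  define A where "A = {J. submodule X J \<and> I \<subseteq> J \<and> a \<notin> J}"
  have "\<forall>C\<in>chains A. \<exists>U\<in>A. \<forall>Y\<in>C. Y \<subseteq> U"
  proof
    fix C assume C: "C \<in> chains A"
    show "\<exists>U\<in>A. \<forall>Y\<in>C. Y \<subseteq> U"
    proof (cases "C = {}")
      case True then show ?thesis using I a unfolding A_def by auto
    next
      case False
      have "submodule X (\<Union>C)"
        using chain_union_submodule[OF False] C unfolding chains_def A_def by auto
      moreover have "I \<subseteq> \<Union>C" "a \<notin> \<Union>C" using False C unfolding chains_def A_def by auto
      ultimately show ?thesis unfolding A_def by blast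
    qed
  qed
  then obtain M where M: "M \<in> A" and max: "\<forall>Y\<in>A. M \<subseteq> Y \<longrightarrow> Y = M"
    using Zorn_Lemma2 by blast
  have "prime_sub X M"
    unfolding prime_sub_def
  proof (intro conjI allI impI)
    show "submodule X M" using M unfolding A_def by auto
  next
    fix F assume F: "F \<subseteq> Sub X" and st: "\<forall>J\<in>F. M \<subset> J"
    have "\<forall>J\<in>F. a \<in> J"
    proof
      fix J assume J: "J \<in> F"
      show "a \<in> J"
      proof (rule ccontr)
        assume "a \<notin> J"
        then have "J \<in> A" using J F M st unfolding A_def Sub_def by auto
        then show False using max st J by auto
      qed
    qed
    then have "a \<in> \<Inter>F" by blast
    moreover have "M \<subseteq> \<Inter>F" using st by blast
    moreover have "a \<notin> M" using M unfolding A_def by auto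
    ultimately show "M \<subset> \<Inter>F" by blast
  qed
  then show ?thesis using M unfolding Spc_def A_def by auto
qed

theorem mainTheorem3:
  fixes X :: "('a, 's) datum"
  shows "inj_on (SuppI X) (Sub X) \<and>
         (\<forall>I \<in> Sub X. {a. Supp X a \<subseteq> SuppI X I} = I)"
proof -
  have inv: "\<forall>I \<in> Sub X. {a. Supp X a \<subseteq> SuppI X I} = I"
  proof
    fix I assume "I \<in> Sub X"
    then have I: "submodule X I" unfolding Sub_def by auto
    show "{a. Supp X a \<subseteq> SuppI X I} = I"
    proof
      show "I \<subseteq> {a. Supp X a \<subseteq> SuppI X I}"
        unfolding Supp_def SuppI_def by blast
    next
      show "{a. Supp X a \<subseteq> SuppI X I} \<subseteq> I"
      proof
        fix a assume a: "a \<in> {a. Supp X a \<subseteq> SuppI X I}"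
        show "a \<in> I"
        proof (rule ccontr)
          assume "a \<notin> I"
          then obtain P where "P \<in> Spc X" "I \<subseteq> P" "a \<notin> P" using exists_prime[OF I] by blast
          then show False using a unfolding Supp_def SuppI_def by blast
        qed
      qed
    qed
  qed
  have "inj_on (SuppI X) (Sub X)"
    by (rule inj_on_inverseI[where g = "\<lambda>Z. {a. Supp X a \<subseteq> Z}"]) (use inv in blast)
  then show ?thesis using inv by blast
qed

end
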